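(* Let $\mathcal{X},\mathcal{Y}$ be finite, $p(X,Y)$ with $p(X)$ of full support, and $q(T|X)\in C(\mathcal{X},\mathcal{T})$. Then (i) $q_{\pi_{\mathcal{X}}}(Y,T)=q(Y,T)$, in particular $I_{q_{\pi_{\mathcal{X}}}}(Y;T)=I_q(Y;T)$; (ii) $I_{q_{\pi_{\mathcal{X}}}}(X;T)\le I_q(X;T)$, with equality if and only if $q_{\pi_{\mathcal{X}}}(T|X)=q(T|X)$.
   Context: $\mathcal{T}=\mathbb{N}$. The relation $x\sim_{\mathcal{X}}x'\iff p(Y|x)=p(Y|x')$ has partition $\{\mathcal{X}_j\}_j$ and projection $\pi_{\mathcal{X}}$. $q_{\pi_{\mathcal{X}}}(t|x):=\sum_j\delta_{x\in\mathcal{X}_j}\frac{\sum_{x'\in\mathcal{X}_j}q(t|x')p(x')}{p(\mathcal{X}_j)}$. For any channel $r(T|X)$, joints are $r(x,y,t)=p(x,y)r(t|x)$ and mutual informations are computed from them. *)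

theory Defs
  imports "HOL-Analysis.Analysis"
begin

definition is_joint_pmf :: "('x::finite \<Rightarrow> 'y::finite \<Rightarrow> real) \<Rightarrow> bool" where
  "is_joint_pmf p \<longleftrightarrow> (\<forall>x y. 0 \<le> p x y) \<and> (\<Sum>x\<in>UNIV. \<Sum>y\<in>UNIV. p x y) = 1"

definition marg_x :: "('x::finite \<Rightarrow> 'y::finite \<Rightarrow> real) \<Rightarrow> 'x \<Rightarrow> real" where
  "marg_x p x = (\<Sum>y\<in>UNIV. p x y)"

definition is_channel :: "('x \<Rightarrow> nat \<Rightarrow> real) \<Rightarrow> bool" where
  "is_channel q \<longleftrightarrow> (\<forall>x t. 0 \<le> q x t) \<and> (\<forall>x. ((\<lambda>t. q x t) has_sum 1) UNIV)"

definition equiv_x :: "('x::finite \<Rightarrow> 'y::finite \<Rightarrow> real) \<Rightarrow> 'x \<Rightarrow> 'x \<Rightarrow> bool" where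
  "equiv_x p x x' \<longleftrightarrow> (\<forall>y. p x y / marg_x p x = p x' y / marg_x p x')"

definition proj_channel ::
  "('x::finite \<Rightarrow> 'y::finite \<Rightarrow> real) \<Rightarrow> ('x \<Rightarrow> nat \<Rightarrow> real) \<Rightarrow> 'x \<Rightarrow> nat \<Rightarrow> real" where
  "proj_channel p q x t =
     (\<Sum>x'\<in>{x'. equiv_x p x x'}. q x' t * marg_x p x') / (\<Sum>x'\<in>{x'. equiv_x p x x'}. marg_x p x')"

definition mutual_info :: "('a::finite \<Rightarrow> nat \<Rightarrow> real) \<Rightarrow> real" where
  "mutual_info J = infsum (\<lambda>t. \<Sum>a\<in>UNIV. if J a t = 0 then 0
       else J a t * log 2 (J a t / (infsum (\<lambda>t'. J a t') UNIV * (\<Sum>a'\<in>UNIV. J a' t)))) UNIV"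

definition joint_YT :: "('x::finite \<Rightarrow> 'y::finite \<Rightarrow> real) \<Rightarrow> ('x \<Rightarrow> nat \<Rightarrow> real) \<Rightarrow> 'y \<Rightarrow> nat \<Rightarrow> real" where
  "joint_YT p r y t = (\<Sum>x\<in>UNIV. p x y * r x t)"

definition joint_XT :: "('x::finite \<Rightarrow> 'y::finite \<Rightarrow> real) \<Rightarrow> ('x \<Rightarrow> nat \<Rightarrow> real) \<Rightarrow> 'x \<Rightarrow> nat \<Rightarrow> real" where
  "joint_XT p r x t = (\<Sum>y\<in>UNIV. p x y * r x t)"

end

theory Submission
  imports Defs
begin


lemma sum_collect_if: "sum g {x'::'a::finite. P x'} = (\<Sum>x'\<in>UNIV. if P x' then g x' else 0)"
  using sum.inter_filter[of UNIV g P] by simp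

lemma equiv_x_refl: "equiv_x p x x" by (simp add: equiv_x_def)
lemma equiv_x_sym: "equiv_x p x x' \<Longrightarrow> equiv_x p x' x" by (simp add: equiv_x_def)
lemma equiv_x_trans: "equiv_x p x x' \<Longrightarrow> equiv_x p x' x'' \<Longrightarrow> equiv_x p x x''" by (simp add: equiv_x_def)
lemma equiv_class_eq: "equiv_x p x x' \<Longrightarrow> {z. equiv_x p x z} = {z. equiv_x p x' z}"
  by (auto intro: equiv_x_trans equiv_x_sym)

lemma Z_pos:
  fixes p :: "'x::finite \<Rightarrow> 'y::finite \<Rightarrow> real"
  assumes "\<forall>x. marg_x p x > 0"
  shows "(\<Sum>x'\<in>{x'. equiv_x p x x'}. marg_x p x') > 0"
proof -
  have "(\<Sum>x'\<in>{x'. equiv_x p x x'}. marg_x p x') \<ge> (\<Sum>x'\<in>{x}. marg_x p x')"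
    by (rule sum_mono2) (use assms equiv_x_refl in \<open>auto intro: less_imp_le\<close>)
  moreover have "(\<Sum>x'\<in>{x}. marg_x p x') = marg_x p x" by simp
  ultimately show ?thesis using assms by (smt (verit))
qed

lemma swap_lemma:
  fixes p :: "'x::finite \<Rightarrow> 'y::finite \<Rightarrow> real"
  assumes pos: "\<forall>x. marg_x p x > 0"
    and fc: "\<And>x x'. equiv_x p x x' \<Longrightarrow> f x = f x'"
  shows "(\<Sum>x\<in>UNIV. marg_x p x * proj_channel p q x t * f x) = (\<Sum>x\<in>UNIV. marg_x p x * q x t * f x)"
proof -
  define P where "P = marg_x p"
  define E where "E = equiv_x p"
  define Z where "Z x = (\<Sum>x'\<in>{x'. E x x'}. P x')" for x
  have ZE: "E x x' \<Longrightarrow> Z x = Z x'" for x x' unfolding Z_def E_def using equiv_class_eq by metis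
  have Zsym: "Z x' = (\<Sum>x\<in>UNIV. if E x x' then P x else 0)" for x'
    unfolding Z_def sum_collect_if E_def by (rule sum.cong) (auto intro: equiv_x_sym)
  have "(\<Sum>x\<in>UNIV. marg_x p x * proj_channel p q x t * f x)
      = (\<Sum>x\<in>UNIV. \<Sum>x'\<in>UNIV. if E x x' then P x * (f x' * q x' t * P x' / Z x') else 0)"
  proof (rule sum.cong[OF refl])
    fix x
    have "marg_x p x * proj_channel p q x t * f x
       = (\<Sum>x'\<in>UNIV. if E x x' then P x * f x * (q x' t * P x') / Z x else 0)"
      unfolding proj_channel_def P_def Z_def E_def sum_collect_if[of _ "equiv_x p x"] sum_divide_distrib sum_distrib_left
        sum_distrib_right
      by (rule sum.cong) auto
    also have "\<dots> = (\<Sum>x'\<in>UNIV. if E x x' then P x * (f x' * q x' t * P x' / Z x') else 0)"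
      by (rule sum.cong) (auto simp: ZE fc E_def)
    finally show "marg_x p x * proj_channel p q x t * f x = \<dots>" .
  qed
  also have "\<dots> = (\<Sum>x'\<in>UNIV. \<Sum>x\<in>UNIV. if E x x' then P x * (f x' * q x' t * P x' / Z x') else 0)"
    by (rule sum.swap)
  also have "\<dots> = (\<Sum>x'\<in>UNIV. (f x' * q x' t * P x' / Z x') * Z x')"
  proof (rule sum.cong[OF refl])
    fix x'
    show "(\<Sum>x\<in>UNIV. if E x x' then P x * (f x' * q x' t * P x' / Z x') else 0) = (f x' * q x' t * P x' / Z x') * Z x'"
      unfolding Zsym[of x'] sum_distrib_left by (rule sum.cong) (auto simp: mult_ac)
  qed
  also have "\<dots> = (\<Sum>x'\<in>UNIV. P x' * q x' t * f x')"
  proof (rule sum.cong[OF refl])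
    fix x' show "f x' * q x' t * P x' / Z x' * Z x' = P x' * q x' t * f x'"
      using Z_pos[OF pos, of x'] unfolding Z_def P_def E_def by (simp add: mult_ac)
  qed
  finally show ?thesis unfolding P_def .
qed



lemma ln_strict: fixes y :: real assumes "y > 0" "y \<noteq> 1" shows "ln y < y - 1"
proof -
  have s: "sqrt y > 0" using assms by simp
  have "ln y = 2 * ln (sqrt y)" using assms by (simp add: ln_sqrt)
  also have "\<dots> \<le> 2 * (sqrt y - 1)" using ln_le_minus_one[OF s] by simp
  also have "\<dots> < y - 1"
  proof -
    have "sqrt y \<noteq> 1" using assms by auto
    then have "(sqrt y - 1)^2 > 0" by simp
    moreover have "(sqrt y)^2 = y" using assms by simp
    ultimately show ?thesis by (simp add: power2_eq_square algebra_simps)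
  qed
  finally show ?thesis .
qed

lemma ln_lower: fixes z :: real assumes "z > 0" shows "1 - 1/z \<le> ln z"
  using ln_le_minus_one[of "1/z"] assms by (simp add: ln_div)

lemma ln_lower_strict: fixes z :: real assumes "z > 0" "z \<noteq> 1" shows "1 - 1/z < ln z"
  using ln_strict[of "1/z"] assms by (simp add: ln_div)

lemma perx:
  fixes P u v R :: real
  assumes P: "P > 0" and u: "u \<ge> 0" and v: "v \<ge> 0" and uv: "u > 0 \<Longrightarrow> v > 0 \<and> R > 0"
  shows "(if P*u = 0 then 0 else P*u*log 2 (P*u/(P*R))) - P*u*(if v = 0 then 0 else log 2 (v/R))
           \<ge> (P*u - P * v)/ln 2"
    and "(if P*u = 0 then 0 else P*u*log 2 (P*u/(P*R))) - P*u*(if v = 0 then 0 else log 2 (v/R))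
           = (P*u - P * v)/ln 2 \<Longrightarrow> u = v"
proof -
  have l2: "ln 2 > (0::real)" by simp
  have "((if P*u = 0 then 0 else P*u*log 2 (P*u/(P*R))) - P*u*(if v = 0 then 0 else log 2 (v/R))
           \<ge> (P*u - P * v)/ln 2) \<and>
        ((if P*u = 0 then 0 else P*u*log 2 (P*u/(P*R))) - P*u*(if v = 0 then 0 else log 2 (v/R))
           = (P*u - P * v)/ln 2 \<longrightarrow> u = v)"
  proof (cases "u = 0")
    case True
    then show ?thesis using P v l2 by (auto simp: divide_nonneg_pos)
  next
    case False
    then have u0: "u > 0" using u by simp
    with uv have v0: "v > 0" and R0: "R > 0" by auto
    have e: "(if P*u = 0 then 0 else P*u*log 2 (P*u/(P*R))) - P*u*(if v = 0 then 0 else log 2 (v/R))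
           = P*u*ln (u/v) / ln 2"
      using P u0 v0 R0 by (simp add: log_def ln_div field_simps)
    have k: "P*u*(1 - 1/(u/v)) = P*u - P * v" using u0 v0 by (simp add: field_simps)
    have A: "P*u*(1 - 1/(u/v)) \<le> P*u*ln (u/v)"
      using ln_lower[of "u/v"] u0 v0 P by (intro mult_left_mono) auto
    have B: "u \<noteq> v \<Longrightarrow> P*u*(1 - 1/(u/v)) < P*u*ln (u/v)"
      using ln_lower_strict[of "u/v"] u0 v0 P by (intro mult_strict_left_mono) auto
    show ?thesis unfolding e using A B k l2
      by (auto simp: divide_right_mono) (metis divide_cancel_right less_irrefl order_less_imp_le ln_gt_zero_iff)
  qed
  then show "(if P*u = 0 then 0 else P*u*log 2 (P*u/(P*R))) - P*u*(if v = 0 then 0 else log 2 (v/R))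
           \<ge> (P*u - P * v)/ln 2"
    and "(if P*u = 0 then 0 else P*u*log 2 (P*u/(P*R))) - P*u*(if v = 0 then 0 else log 2 (v/R))
           = (P*u - P * v)/ln 2 \<Longrightarrow> u = v" by auto
qed



lemma term_bounds:
  fixes P u R :: real
  assumes P: "P > 0" and u: "u \<ge> 0" and R: "R \<ge> P*u"
  shows "(if P*u = 0 then 0 else P*u*log 2 (P*u/(P*R))) \<ge> (P*u - P*R)/ln 2"
    and "(if P*u = 0 then 0 else P*u*log 2 (P*u/(P*R))) \<le> P*u*(- log 2 P)"
proof -
  have l2: "ln 2 > (0::real)" by simp
  have "(if P*u = 0 then 0 else P*u*log 2 (P*u/(P*R))) \<ge> (P*u - P*R)/ln 2 \<and>
        (if P*u = 0 then 0 else P*u*log 2 (P*u/(P*R))) \<le> P*u*(- log 2 P)"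
  proof (cases "u = 0")
    case True
    have "R \<ge> 0" using R True by simp
    then show ?thesis using True P l2 by (simp add: divide_nonneg_pos)
  next
    case False
    then have u0: "u > 0" using u by simp
    have R0: "R > 0" using R P u0 by (smt (verit) mult_pos_pos)
    have e: "(if P*u = 0 then 0 else P*u*log 2 (P*u/(P*R))) = P*u*ln (u/R) / ln 2"
      using P u0 R0 by (simp add: log_def)
    have A: "P*u*(1 - 1/(u/R)) \<le> P*u*ln (u/R)"
      using ln_lower[of "u/R"] u0 R0 P by (intro mult_left_mono) auto
    have k: "P*u*(1 - 1/(u/R)) = P*u - P*R" using u0 R0 by (simp add: field_simps)
    have le: "u/R \<le> 1/P" using R P u0 R0 by (simp add: field_simps)
    have B: "ln (u/R) \<le> ln (1/P)" using le u0 R0 P by (subst ln_le_cancel_iff) auto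
    have B2: "P*u*ln (u/R) \<le> P*u*ln (1/P)" using B P u0 by (intro mult_left_mono) auto
    have C: "P*u*ln (1/P) / ln 2 = P*u*(- log 2 P)" using P by (simp add: log_def ln_div)
    have D1: "(P*u - P*R)/ln 2 \<le> P*u*ln (u/R) / ln 2" using A k l2 by (intro divide_right_mono) auto
    have D2: "P*u*ln (u/R) / ln 2 \<le> P*u*ln (1/P) / ln 2" using B2 l2 by (intro divide_right_mono) auto
    show ?thesis unfolding e using D1 D2 C by simp
  qed
  then show "(if P*u = 0 then 0 else P*u*log 2 (P*u/(P*R))) \<ge> (P*u - P*R)/ln 2"
    and "(if P*u = 0 then 0 else P*u*log 2 (P*u/(P*R))) \<le> P*u*(- log 2 P)" by auto
qed



definition RR :: "('x::finite \<Rightarrow> 'y::finite \<Rightarrow> real) \<Rightarrow> ('x \<Rightarrow> nat \<Rightarrow> real) \<Rightarrow> nat \<Rightarrow> real" where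
  "RR p w t = (\<Sum>x\<in>UNIV. marg_x p x * w x t)"

definition TT :: "('x::finite \<Rightarrow> 'y::finite \<Rightarrow> real) \<Rightarrow> ('x \<Rightarrow> nat \<Rightarrow> real) \<Rightarrow> nat \<Rightarrow> real" where
  "TT p w t = (\<Sum>x\<in>UNIV. if marg_x p x * w x t = 0 then 0
      else marg_x p x * w x t * log 2 (marg_x p x * w x t / (marg_x p x * RR p w t)))"

lemma has_sum_finsum:
  fixes f :: "'i \<Rightarrow> 'a \<Rightarrow> real"
  assumes "finite I" "\<And>i. i \<in> I \<Longrightarrow> (f i has_sum s i) A"
  shows "((\<lambda>a. \<Sum>i\<in>I. f i a) has_sum (\<Sum>i\<in>I. s i)) A"
  using assms
proof (induction I rule: finite_induct)
  case empty then show ?case by simp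
next
  case (insert i I)
  then show ?case by (simp add: has_sum_add)
qed

lemma marg_sum: "is_joint_pmf p \<Longrightarrow> (\<Sum>x\<in>UNIV. marg_x p x) = 1"
  by (simp add: is_joint_pmf_def marg_x_def)

lemma marg_nonneg: "is_joint_pmf p \<Longrightarrow> marg_x p x \<ge> 0"
  by (simp add: is_joint_pmf_def marg_x_def sum_nonneg)

lemma proj_nonneg:
  assumes "\<forall>x. marg_x p x > 0" "is_channel q"
  shows "proj_channel p q x t \<ge> 0"
  using assms unfolding proj_channel_def is_channel_def
  by (intro divide_nonneg_nonneg sum_nonneg mult_nonneg_nonneg) (auto intro: less_imp_le)

lemma proj_const: "equiv_x p x x' \<Longrightarrow> proj_channel p q x t = proj_channel p q x' t"
  unfolding proj_channel_def using equiv_class_eq[of p x x'] by simp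

lemma proj_pos:
  fixes p :: "'x::finite \<Rightarrow> 'y::finite \<Rightarrow> real"
  assumes pos: "\<forall>x. marg_x p x > 0" and ch: "is_channel q" and qp: "q x t > 0"
  shows "proj_channel p q x t > 0"
proof -
  have "(\<Sum>x'\<in>{x'. equiv_x p x x'}. q x' t * marg_x p x') \<ge> q x t * marg_x p x"
  proof (rule member_le_sum)
    show "x \<in> {x'. equiv_x p x x'}" by (simp add: equiv_x_refl)
    fix x' show "0 \<le> q x' t * marg_x p x'" using ch pos[rule_format, of x']
      by (simp add: is_channel_def)
  qed simp
  moreover have "q x t * marg_x p x > 0" using qp pos by simp
  ultimately show ?thesis unfolding proj_channel_def using Z_pos[OF pos, of x] by simp
qed

lemma proj_channel_is_channel:
  fixes p :: "'x::finite \<Rightarrow> 'y::finite \<Rightarrow> real"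
  assumes pos: "\<forall>x. marg_x p x > 0" and ch: "is_channel q"
  shows "is_channel (proj_channel p q)"
  unfolding is_channel_def
proof (intro conjI allI)
  fix x t show "0 \<le> proj_channel p q x t" using proj_nonneg[OF pos ch] .
next
  fix x
  define S where "S = {x'. equiv_x p x x'}"
  define Z where "Z = (\<Sum>x'\<in>S. marg_x p x')"
  have Z0: "Z > 0" unfolding Z_def S_def using Z_pos[OF pos] .
  have e: "proj_channel p q x t = (\<Sum>x'\<in>S. (marg_x p x' / Z) * q x' t)" for t
    unfolding proj_channel_def S_def[symmetric] Z_def[symmetric] sum_divide_distrib
    by (rule sum.cong) auto
  have "((\<lambda>t. \<Sum>x'\<in>S. (marg_x p x' / Z) * q x' t) has_sum (\<Sum>x'\<in>S. (marg_x p x' / Z) * 1)) UNIV"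
    apply (rule has_sum_finsum, simp)
    apply (rule has_sum_cmult_right) using ch by (simp add: is_channel_def)
  moreover have "(\<Sum>x'\<in>S. (marg_x p x' / Z) * 1) = 1"
    using Z0 by (simp add: Z_def sum_divide_distrib[symmetric])
  ultimately show "((\<lambda>t. proj_channel p q x t) has_sum 1) UNIV" unfolding e by simp
qed

lemma RR_eq:
  fixes p :: "'x::finite \<Rightarrow> 'y::finite \<Rightarrow> real"
  assumes pos: "\<forall>x. marg_x p x > 0"
  shows "RR p (proj_channel p q) t = RR p q t"
  using swap_lemma[OF pos, of "\<lambda>_. 1" q t] unfolding RR_def by simp

lemma YT_eq:
  fixes p :: "'x::finite \<Rightarrow> 'y::finite \<Rightarrow> real"
  assumes pos: "\<forall>x. marg_x p x > 0"
  shows "joint_YT p (proj_channel p q) = joint_YT p q"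
proof (intro ext)
  fix y t
  have e: "p x y * w x t = marg_x p x * w x t * (p x y / marg_x p x)" for x and w :: "_ \<Rightarrow> nat \<Rightarrow> real"
    using pos[rule_format, of x] by simp
  have "joint_YT p (proj_channel p q) y t = (\<Sum>x\<in>UNIV. marg_x p x * proj_channel p q x t * (p x y / marg_x p x))"
    unfolding joint_YT_def by (rule sum.cong[OF refl], rule e)
  also have "\<dots> = (\<Sum>x\<in>UNIV. marg_x p x * q x t * (p x y / marg_x p x))"
    by (rule swap_lemma[OF pos]) (simp add: equiv_x_def)
  also have "\<dots> = joint_YT p q y t"
    unfolding joint_YT_def by (rule sum.cong[OF refl], rule e[symmetric])
  finally show "joint_YT p (proj_channel p q) y t = joint_YT p q y t" .
qed

lemma MI_XT:
  fixes p :: "'x::finite \<Rightarrow> 'y::finite \<Rightarrow> real"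
  assumes ch: "is_channel w"
  shows "mutual_info (joint_XT p w) = infsum (TT p w) UNIV"
proof -
  have J: "joint_XT p w x t = marg_x p x * w x t" for x t
    unfolding joint_XT_def marg_x_def by (simp add: sum_distrib_right)
  have I: "infsum (\<lambda>t'. joint_XT p w x t') UNIV = marg_x p x" for x
  proof -
    have "((\<lambda>t'. marg_x p x * w x t') has_sum (marg_x p x * 1)) UNIV"
      using ch by (intro has_sum_cmult_right) (auto simp: is_channel_def)
    then show ?thesis unfolding J by (simp add: infsumI)
  qed
  show ?thesis unfolding mutual_info_def I TT_def RR_def J by simp
qed

lemma TT_bounds:
  fixes p :: "'x::finite \<Rightarrow> 'y::finite \<Rightarrow> real"
  assumes jp: "is_joint_pmf p" and pos: "\<forall>x. marg_x p x > 0" and ch: "is_channel w"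
  shows "0 \<le> TT p w t" "TT p w t \<le> (\<Sum>x\<in>UNIV. marg_x p x * w x t * (- log 2 (marg_x p x)))"
proof -
  have w0: "w x t \<ge> 0" for x t using ch by (simp add: is_channel_def)
  have R: "RR p w t \<ge> marg_x p x * w x t" for x
    unfolding RR_def by (rule member_le_sum) (use pos w0 in \<open>auto intro: mult_nonneg_nonneg less_imp_le\<close>)
  have "TT p w t \<ge> (\<Sum>x\<in>UNIV. (marg_x p x * w x t - marg_x p x * RR p w t)/ln 2)"
    unfolding TT_def by (rule sum_mono, rule term_bounds(1)) (use pos w0 R in auto)
  also have "(\<Sum>x\<in>UNIV. (marg_x p x * w x t - marg_x p x * RR p w t)/ln 2) = 0"
    using marg_sum[OF jp] by (simp add: sum_divide_distrib[symmetric] sum_subtractf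
        sum_distrib_right[symmetric] RR_def)
  finally show "0 \<le> TT p w t" .
  show "TT p w t \<le> (\<Sum>x\<in>UNIV. marg_x p x * w x t * (- log 2 (marg_x p x)))"
    unfolding TT_def by (rule sum_mono, rule term_bounds(2)) (use pos w0 R in auto)
qed

lemma TT_summable:
  fixes p :: "'x::finite \<Rightarrow> 'y::finite \<Rightarrow> real"
  assumes jp: "is_joint_pmf p" and pos: "\<forall>x. marg_x p x > 0" and ch: "is_channel w"
  shows "TT p w summable_on UNIV"
proof (rule summable_on_comparison_test)
  have "((\<lambda>t. \<Sum>x\<in>UNIV. marg_x p x * (- log 2 (marg_x p x)) * w x t) has_sum
        (\<Sum>x\<in>UNIV. marg_x p x * (- log 2 (marg_x p x)) * 1)) UNIV"
    apply (rule has_sum_finsum, simp)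
    apply (rule has_sum_cmult_right) using ch by (simp add: is_channel_def)
  then show "(\<lambda>t. \<Sum>x\<in>UNIV. marg_x p x * w x t * (- log 2 (marg_x p x))) summable_on UNIV"
    by (simp add: summable_on_def mult_ac) blast
  show "\<And>t. t \<in> UNIV \<Longrightarrow> TT p w t \<le> (\<Sum>x\<in>UNIV. marg_x p x * w x t * (- log 2 (marg_x p x)))"
    using TT_bounds(2)[OF jp pos ch] by blast
  show "\<And>t. t \<in> UNIV \<Longrightarrow> 0 \<le> TT p w t" using TT_bounds(1)[OF jp pos ch] by blast
qed



lemma TT_diff:
  fixes p :: "'x::finite \<Rightarrow> 'y::finite \<Rightarrow> real"
  assumes jp: "is_joint_pmf p" and pos: "\<forall>x. marg_x p x > 0" and ch: "is_channel q"
  shows "TT p (proj_channel p q) t \<le> TT p q t"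
    and "TT p (proj_channel p q) t = TT p q t \<Longrightarrow> (\<forall>x. proj_channel p q x t = q x t)"
proof -
  define P where "P = marg_x p"
  define u where "u x = q x t" for x
  define v where "v x = proj_channel p q x t" for x
  define R where "R = RR p q t"
  define f where "f x = (if v x = 0 then 0 else log 2 (v x / R))" for x
  define tq where "tq x = (if P x * u x = 0 then 0 else P x * u x * log 2 (P x * u x / (P x * R)))" for x
  define g where "g x = tq x - P x * u x * f x - (P x * u x - P x * v x) / ln 2" for x
  have P0: "P x > 0" for x using pos P_def by simp
  have u0: "u x \<ge> 0" for x using ch u_def by (simp add: is_channel_def)
  have v0: "v x \<ge> 0" for x using proj_nonneg[OF pos ch] v_def by simp
  have Ru: "R \<ge> P x * u x" for x
    unfolding R_def RR_def P_def u_def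
    by (rule member_le_sum) (use P0 u0 in \<open>auto simp: P_def u_def less_imp_le\<close>)
  have uv: "u x > 0 \<Longrightarrow> v x > 0 \<and> R > 0" for x
  proof
    assume "u x > 0"
    then show "v x > 0" using proj_pos[OF pos ch] u_def v_def by simp
    show "R > 0" using Ru[of x] P0[of x] \<open>u x > 0\<close> by (smt (verit) mult_pos_pos)
  qed
  have TTq: "TT p q t = (\<Sum>x\<in>UNIV. tq x)" unfolding TT_def tq_def P_def u_def R_def ..
  have TTp: "TT p (proj_channel p q) t = (\<Sum>x\<in>UNIV. P x * v x * f x)"
    unfolding TT_def RR_eq[OF pos] R_def[symmetric]
  proof (rule sum.cong[OF refl])
    fix x show "(if marg_x p x * proj_channel p q x t = 0 then 0
        else marg_x p x * proj_channel p q x t * log 2 (marg_x p x * proj_channel p q x t / (marg_x p x * R)))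
        = P x * v x * f x"
      using P0[of x] unfolding P_def v_def f_def by simp
  qed
  also have "\<dots> = (\<Sum>x\<in>UNIV. P x * u x * f x)"
    unfolding P_def u_def v_def
    by (rule swap_lemma[OF pos]) (simp add: f_def v_def proj_const[of p _ _ q t])
  finally have TTp': "TT p (proj_channel p q) t = (\<Sum>x\<in>UNIV. P x * u x * f x)" .
  have sumuv: "(\<Sum>x\<in>UNIV. (P x * u x - P x * v x) / ln 2) = 0"
    using RR_eq[OF pos, of q t] unfolding RR_def P_def u_def v_def
    by (simp add: sum_divide_distrib[symmetric] sum_subtractf)
  have g0: "g x \<ge> 0" for x
    using perx(1)[OF P0[of x] u0[of x] v0[of x] uv[of x]] unfolding g_def tq_def f_def by simp
  have gsum: "TT p q t - TT p (proj_channel p q) t = (\<Sum>x\<in>UNIV. g x)"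
    unfolding TTq TTp' g_def sum_subtractf sumuv by simp
  show "TT p (proj_channel p q) t \<le> TT p q t"
    using gsum sum_nonneg[of UNIV g] g0 by simp
  assume eq: "TT p (proj_channel p q) t = TT p q t"
  then have "(\<Sum>x\<in>UNIV. g x) = 0" using gsum by simp
  then have "\<forall>x. g x = 0" using sum_nonneg_eq_0_iff[of UNIV g] g0 by simp
  show "\<forall>x. proj_channel p q x t = q x t"
  proof
    fix x
    have "g x = 0" using \<open>\<forall>x. g x = 0\<close> by simp
    then have "u x = v x" using perx(2)[OF P0[of x] u0[of x] v0[of x] uv[of x]] unfolding g_def tq_def f_def by simp
    then show "proj_channel p q x t = q x t" unfolding u_def v_def by simp
  qed
qed

theorem lemma4:
  fixes p :: "'x::finite \<Rightarrow> 'y::finite \<Rightarrow> real"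
    and q :: "'x \<Rightarrow> nat \<Rightarrow> real"
  assumes "is_joint_pmf p"
    and "\<forall>x. marg_x p x > 0"
    and "is_channel q"
  shows "joint_YT p (proj_channel p q) = joint_YT p q
     \<and> mutual_info (joint_YT p (proj_channel p q)) = mutual_info (joint_YT p q)
     \<and> mutual_info (joint_XT p (proj_channel p q)) \<le> mutual_info (joint_XT p q)
     \<and> (mutual_info (joint_XT p (proj_channel p q)) = mutual_info (joint_XT p q)
          \<longleftrightarrow> proj_channel p q = q)"
proof -
  note jp = assms(1) and pos = assms(2) and ch = assms(3)
  have chp: "is_channel (proj_channel p q)" by (rule proj_channel_is_channel[OF pos ch])
  have YT: "joint_YT p (proj_channel p q) = joint_YT p q" by (rule YT_eq[OF pos])
  have S1: "TT p (proj_channel p q) summable_on UNIV" by (rule TT_summable[OF jp pos chp])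
  have S2: "TT p q summable_on UNIV" by (rule TT_summable[OF jp pos ch])
  have le: "infsum (TT p (proj_channel p q)) UNIV \<le> infsum (TT p q) UNIV"
    by (rule infsum_mono[OF S1 S2]) (use TT_diff(1)[OF jp pos ch] in auto)
  have iff: "infsum (TT p (proj_channel p q)) UNIV = infsum (TT p q) UNIV \<longleftrightarrow> proj_channel p q = q"
  proof
    assume eq: "infsum (TT p (proj_channel p q)) UNIV = infsum (TT p q) UNIV"
    define h where "h t = TT p q t + - TT p (proj_channel p q) t" for t
    have hs: "(h has_sum (infsum (TT p q) UNIV + - infsum (TT p (proj_channel p q)) UNIV)) UNIV"
      unfolding h_def
      by (intro has_sum_add has_sum_uminusI) (use S1 S2 in \<open>auto simp: has_sum_infsum\<close>)
    then have "infsum h UNIV = 0" using eq by (simp add: infsumI)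
    then have "h t = 0" for t
      by (intro nonneg_infsum_le_0D[of h UNIV]) (use hs TT_diff(1)[OF jp pos ch] in \<open>auto simp: h_def summable_on_def\<close>)
    then have "\<forall>x. proj_channel p q x t = q x t" for t
      using TT_diff(2)[OF jp pos ch] unfolding h_def by simp
    then show "proj_channel p q = q" by (intro ext) auto
  qed simp
  show ?thesis using YT le iff unfolding MI_XT[OF ch] MI_XT[OF chp] by simp
qed

end
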